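(* $\mathsf{SIPT}^2_2 \not\le_{\rm sc} \mathsf{D}^2_2$.
   Context: A 2-coloring of pairs is $f:[\omega]^2\to 2$, with $f(x,y)$ meaning $f(\{x,y\})$ for $x<y$; it is stable if $\lim_u f(x,u)$ exists for all $x$. $A\oplus B=\{2x:x\in A\}\cup\{2y+1:y\in B\}$. A set $H=H_L\oplus H_R$ with $H_L,H_R$ infinite is increasing p-homogeneous for $f$ if $f(x,y)$ is constant over $x\in H_L$, $y\in H_R$, $x<y$. An infinite set $H$ is limit homogeneous for $f$ if $\lim_u f(x,u)$ is the same for all $x\in H$. $\mathsf{SIPT}^2_2$ (resp. $\mathsf{D}^2_2$) is the problem whose instances are stable 2-colorings of pairs $f$ and whose solutions are the sets increasing p-homogeneous (resp. limit homogeneous) for $f$. $\mathsf P\le_{\rm sc}\mathsf Q$ (strongly computably reducible) if every instance $X$ of $\mathsf P$ computes an instance $\widehat X$ of $\mathsf Q$ such that every solution $\widehat Y$ of $\widehat X$ computes (by itself, without $X$) some solution of $X$. *)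

theory Defs
  imports Main "HOL-Library.Nat_Bijection"
begin

datatype rf = Zero | Succ | Proj nat | Oracle | Comp rf "rf list" | PrimRec rf rf | Min rf

inductive ev :: "nat set \<Rightarrow> rf \<Rightarrow> nat list \<Rightarrow> nat \<Rightarrow> bool" for A :: "nat set" where
  ev_zero: "ev A Zero xs 0"
| ev_succ: "ev A Succ (x # xs) (Suc x)"
| ev_proj: "i < length xs \<Longrightarrow> ev A (Proj i) xs (xs ! i)"
| ev_oracle: "ev A Oracle (x # xs) (if x \<in> A then 1 else 0)"
| ev_comp: "length ys = length gs \<Longrightarrow> (\<forall>i < length gs. ev A (gs ! i) xs (ys ! i))
              \<Longrightarrow> ev A f ys z \<Longrightarrow> ev A (Comp f gs) xs z"
| ev_prim0: "ev A f xs y \<Longrightarrow> ev A (PrimRec f g) (0 # xs) y"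
| ev_primS: "ev A (PrimRec f g) (n # xs) y \<Longrightarrow> ev A g (n # y # xs) z
              \<Longrightarrow> ev A (PrimRec f g) (Suc n # xs) z"
| ev_min: "ev A f (n # xs) 0 \<Longrightarrow> (\<forall>m < n. \<exists>k. ev A f (m # xs) (Suc k))
              \<Longrightarrow> ev A (Min f) xs n"

definition turing_le :: "nat set \<Rightarrow> nat set \<Rightarrow> bool" where
  "turing_le B A \<longleftrightarrow> (\<exists>e. \<forall>n. ev A e [n] (if n \<in> B then 1 else 0))"

text \<open>A problem: a predicate on instances and a solution relation, both on subsets of nat.\<close>
definition sc_reducible ::
  "(nat set \<Rightarrow> bool) \<Rightarrow> (nat set \<Rightarrow> nat set \<Rightarrow> bool) \<Rightarrow>
   (nat set \<Rightarrow> bool) \<Rightarrow> (nat set \<Rightarrow> nat set \<Rightarrow> bool) \<Rightarrow> bool" where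
  "sc_reducible PI PS QI QS \<longleftrightarrow>
     (\<forall>X. PI X \<longrightarrow> (\<exists>Xh. turing_le Xh X \<and> QI Xh \<and>
        (\<forall>Yh. QS Xh Yh \<longrightarrow> (\<exists>Y. turing_le Y Yh \<and> PS X Y))))"

text \<open>A 2-coloring of pairs f is coded as the set of codes prod_encode (x,y), x<y, with f(x,y)=1.\<close>
definition col_of :: "nat set \<Rightarrow> nat \<Rightarrow> nat \<Rightarrow> bool" where
  "col_of X x y \<longleftrightarrow> prod_encode (x, y) \<in> X"

definition coloring_code :: "nat set \<Rightarrow> bool" where
  "coloring_code X \<longleftrightarrow> X \<subseteq> {prod_encode (x, y) | x y. x < y}"

definition stable :: "(nat \<Rightarrow> nat \<Rightarrow> bool) \<Rightarrow> bool" where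
  "stable f \<longleftrightarrow> (\<forall>x. \<exists>b. \<forall>\<^sub>F u in sequentially. f x u = b)"

definition stable_instance :: "nat set \<Rightarrow> bool" where
  "stable_instance X \<longleftrightarrow> coloring_code X \<and> stable (col_of X)"

definition join :: "nat set \<Rightarrow> nat set \<Rightarrow> nat set" where
  "join A B = {2 * x | x. x \<in> A} \<union> {2 * y + 1 | y. y \<in> B}"

definition incr_p_homogeneous :: "(nat \<Rightarrow> nat \<Rightarrow> bool) \<Rightarrow> nat set \<Rightarrow> bool" where
  "incr_p_homogeneous f H \<longleftrightarrow>
     (\<exists>HL HR. H = join HL HR \<and> infinite HL \<and> infinite HR \<and>
        (\<exists>b. \<forall>x\<in>HL. \<forall>y\<in>HR. x < y \<longrightarrow> f x y = b))"

definition limit_homogeneous :: "(nat \<Rightarrow> nat \<Rightarrow> bool) \<Rightarrow> nat set \<Rightarrow> bool" where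
  "limit_homogeneous f H \<longleftrightarrow>
     infinite H \<and> (\<exists>b. \<forall>x\<in>H. \<forall>\<^sub>F u in sequentially. f x u = b)"

definition SIPT22_sol :: "nat set \<Rightarrow> nat set \<Rightarrow> bool" where
  "SIPT22_sol X H \<longleftrightarrow> incr_p_homogeneous (col_of X) H"

definition D22_sol :: "nat set \<Rightarrow> nat set \<Rightarrow> bool" where
  "D22_sol X H \<longleftrightarrow> limit_homogeneous (col_of X) H"

end

theory Submission
  imports Defs "HOL-Library.Countable" "HOL-Library.Infinite_Set"
begin


instance rf :: countable by countable_datatype

inductive_cases evZeroE: "ev A Zero xs z"
inductive_cases evSuccE: "ev A Succ xs z"
inductive_cases evProjE: "ev A (Proj i) xs z"
inductive_cases evOracleE: "ev A Oracle xs z"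
inductive_cases evCompE: "ev A (Comp f gs) xs z"
inductive_cases evPrim0E: "ev A (PrimRec f g) (0 # xs) z"
inductive_cases evPrimSE: "ev A (PrimRec f g) (Suc n # xs) z"
inductive_cases evMinE: "ev A (rf.Min f) xs z"

lemma ev_det: "ev A e xs y \<Longrightarrow> \<forall>z. ev A e xs z \<longrightarrow> y = z"
proof (induction rule: ev.induct)
  case (ev_zero xs) then show ?case by (auto elim: evZeroE)
next
  case (ev_succ x xs) then show ?case by (auto elim: evSuccE)
next
  case (ev_proj i xs) then show ?case by (auto elim: evProjE)
next
  case (ev_oracle x xs) then show ?case by (auto elim: evOracleE)
next
  case (ev_comp ys gs xs f z)
  show ?case
  proof (intro allI impI)
    fix z' assume "ev A (Comp f gs) xs z'"
    then obtain ys' where l: "length ys' = length gs" and a: "\<forall>i<length gs. ev A (gs ! i) xs (ys' ! i)"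
      and b: "ev A f ys' z'" by (auto elim: evCompE)
    have "ys = ys'"
      by (rule nth_equalityI) (use ev_comp.hyps(1) ev_comp.IH(1) l a in auto)
    then show "z = z'" using ev_comp.IH(2) b by auto
  qed
next
  case (ev_prim0 f xs y g)
  show ?case
  proof (intro allI impI)
    fix z' assume "ev A (PrimRec f g) (0 # xs) z'"
    then have "ev A f xs z'" by (rule evPrim0E) auto
    then show "y = z'" using ev_prim0.IH by blast
  qed
next
  case (ev_primS f g n xs y z)
  show ?case
  proof (intro allI impI)
    fix z' assume "ev A (PrimRec f g) (Suc n # xs) z'"
    then obtain y' where "ev A (PrimRec f g) (n # xs) y'" "ev A g (n # y' # xs) z'"
      by (rule evPrimSE) auto
    then show "z = z'" using ev_primS.IH by blast
  qed
next
  case (ev_min f n xs)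
  show ?case
  proof (intro allI impI)
    fix z' assume "ev A (rf.Min f) xs z'"
    then have z0: "ev A f (z' # xs) 0" and zl: "\<forall>m<z'. \<exists>k. ev A f (m # xs) (Suc k)"
      by (auto elim: evMinE)
    show "n = z'"
    proof (rule ccontr)
      assume "n \<noteq> z'"
      then consider "n < z'" | "z' < n" by linarith
      then show False
      proof cases
        case 1 then obtain k where "ev A f (n # xs) (Suc k)" using zl by blast
        then show False using ev_min.IH(1) by auto
      next
        case 2 then obtain k where "ev A f (z' # xs) (Suc k)" "\<forall>z. ev A f (z' # xs) z \<longrightarrow> Suc k = z"
          using ev_min.IH(2) by blast
        then show False using z0 by auto
      qed
    qed
  qed
qed

lemma ev_det': "ev A e xs y \<Longrightarrow> ev A e xs z \<Longrightarrow> y = z"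
  using ev_det by blast

definition agree :: "nat \<Rightarrow> nat set \<Rightarrow> nat set \<Rightarrow> bool" where
  "agree k A T \<longleftrightarrow> T \<inter> {..<k} = A \<inter> {..<k}"

lemma agree_mono: "agree k A T \<Longrightarrow> k' \<le> k \<Longrightarrow> agree k' A T"
proof -
  assume a: "agree k A T" and k: "k' \<le> k"
  have s: "{..<k'} \<subseteq> {..<k}" using k by auto
  have "T \<inter> {..<k'} = (T \<inter> {..<k}) \<inter> {..<k'}" using k by auto
  also have "\<dots> = (A \<inter> {..<k}) \<inter> {..<k'}" using a unfolding agree_def by simp
  also have "\<dots> = A \<inter> {..<k'}" using k by auto
  finally show ?thesis unfolding agree_def .
qed

lemma agree_mem: "agree k A T \<Longrightarrow> x < k \<Longrightarrow> (x \<in> T) = (x \<in> A)"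
  unfolding agree_def by blast

lemma ev_use: "ev A e xs y \<Longrightarrow> \<exists>k. \<forall>T. agree k A T \<longrightarrow> ev T e xs y"
proof (induction rule: ev.induct)
  case (ev_zero xs) then show ?case by (auto intro: ev.intros)
next
  case (ev_succ x xs) then show ?case by (auto intro: ev.intros)
next
  case (ev_proj i xs) then show ?case by (auto intro: ev.intros)
next
  case (ev_oracle x xs)
  show ?case
  proof (intro exI allI impI)
    fix T assume "agree (Suc x) A T"
    then have "(x \<in> T) = (x \<in> A)" by (rule agree_mem) simp
    then show "ev T Oracle (x # xs) (if x \<in> A then 1 else 0)"
      using ev.ev_oracle[of T x xs] by simp
  qed
next
  case (ev_comp ys gs xs f z)
  from ev_comp.IH(1) have "\<forall>i<length gs. \<exists>k. \<forall>T. agree k A T \<longrightarrow> ev T (gs ! i) xs (ys ! i)" by blast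
  then obtain K where K: "\<forall>i<length gs. \<forall>T. agree (K i) A T \<longrightarrow> ev T (gs ! i) xs (ys ! i)"
    by metis
  obtain kf where kf: "\<forall>T. agree kf A T \<longrightarrow> ev T f ys z" using ev_comp.IH(2) by blast
  define k where "k = kf + (\<Sum>i<length gs. K i)"
  have Kk: "K i \<le> k" if "i < length gs" for i
  proof -
    have "K i \<le> (\<Sum>i<length gs. K i)" using that by (intro member_le_sum) auto
    then show ?thesis unfolding k_def by simp
  qed
  show ?case
  proof (intro exI allI impI)
    fix T assume T: "agree k A T"
    have "\<forall>i<length gs. ev T (gs ! i) xs (ys ! i)"
      using K Kk agree_mono[OF T] by blast
    moreover have "ev T f ys z" using kf agree_mono[OF T] unfolding k_def by simp
    ultimately show "ev T (Comp f gs) xs z" using ev_comp.hyps(1) by (auto intro: ev.ev_comp)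
  qed
next
  case (ev_prim0 f xs y g) then show ?case by (auto intro: ev.intros)
next
  case (ev_primS f g n xs y z)
  then obtain k1 k2 where "\<forall>T. agree k1 A T \<longrightarrow> ev T (PrimRec f g) (n # xs) y"
    "\<forall>T. agree k2 A T \<longrightarrow> ev T g (n # y # xs) z" by blast
  then show ?case
    by (intro exI[of _ "k1+k2"]) (meson ev.ev_primS agree_mono le_add1 le_add2)
next
  case (ev_min f n xs)
  from ev_min.IH(2) have "\<forall>m<n. \<exists>k j. \<forall>T. agree k A T \<longrightarrow> ev T f (m # xs) (Suc j)" by metis
  then obtain K J where K: "\<forall>m<n. \<forall>T. agree (K m) A T \<longrightarrow> ev T f (m # xs) (Suc (J m))"
    by metis
  obtain k0 where k0: "\<forall>T. agree k0 A T \<longrightarrow> ev T f (n # xs) 0" using ev_min.IH(1) by blast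
  define k where "k = k0 + (\<Sum>i<n. K i)"
  have Kk: "K i \<le> k" if "i < n" for i
  proof -
    have "K i \<le> (\<Sum>i<n. K i)" using that by (intro member_le_sum) auto
    then show ?thesis unfolding k_def by simp
  qed
  show ?case
  proof (intro exI allI impI)
    fix T assume T: "agree k A T"
    have "\<forall>m<n. \<exists>j. ev T f (m # xs) (Suc j)"
      using K Kk agree_mono[OF T] by blast
    moreover have "ev T f (n # xs) 0" using k0 agree_mono[OF T] unfolding k_def by simp
    ultimately show "ev T (rf.Min f) xs n" by (auto intro: ev.ev_min)
  qed
qed

lemma join_even: "2 * x \<in> join A B \<longleftrightarrow> x \<in> A"
  unfolding join_def by (auto, presburger)

lemma join_odd: "2 * y + 1 \<in> join A B \<longleftrightarrow> y \<in> B"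
  unfolding join_def by (auto, presburger)




primrec kS :: "(nat \<Rightarrow> nat set) \<Rightarrow> nat \<Rightarrow> nat set" where
  "kS Q 0 = UNIV"
| "kS Q (Suc m) = (if infinite {B\<in>kS Q m. m \<in> Q B} then {B\<in>kS Q m. m \<in> Q B} else {B\<in>kS Q m. m \<notin> Q B})"

lemma agree_Suc: "agree m P T \<Longrightarrow> (m \<in> T \<longleftrightarrow> m \<in> P) \<Longrightarrow> agree (Suc m) P T"
  unfolding agree_def by (auto simp: lessThan_Suc)

lemma kS_prop:
  fixes Q :: "nat \<Rightarrow> nat set"
  defines "P \<equiv> {m. infinite {B\<in>kS Q m. m \<in> Q B}}"
  shows "infinite (kS Q m) \<and> (\<forall>B\<in>kS Q m. agree m P (Q B))"
proof (induction m)
  case 0 then show ?case by (simp add: agree_def)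
next
  case (Suc m)
  show ?case
  proof (cases "infinite {B\<in>kS Q m. m \<in> Q B}")
    case True
    then have "m \<in> P" unfolding P_def by simp
    then show ?thesis using True Suc by (auto intro: agree_Suc)
  next
    case False
    have u: "kS Q m = {B\<in>kS Q m. m \<in> Q B} \<union> {B\<in>kS Q m. m \<notin> Q B}" by auto
    have "infinite {B\<in>kS Q m. m \<notin> Q B}" using False Suc u by (metis finite_UnI)
    moreover have "m \<notin> P" using False unfolding P_def by simp
    ultimately show ?thesis using False Suc by (auto intro: agree_Suc)
  qed
qed

lemma koenig_seq: "\<exists>P. \<forall>m. infinite {B. agree m P ((Q::nat\<Rightarrow>nat set) B)}"
proof -
  define P where "P = {m. infinite {B\<in>kS Q m. m \<in> Q B}}"
  have "infinite {B. agree m P (Q B)}" for m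
  proof -
    have "kS Q m \<subseteq> {B. agree m P (Q B)}" using kS_prop[of Q m] unfolding P_def by auto
    then show ?thesis using kS_prop[of Q m] finite_subset by blast
  qed
  then show ?thesis by blast
qed

lemma compactness:
  fixes W :: "nat set \<Rightarrow> nat \<Rightarrow> bool"
  assumes mono: "\<And>P B B'. W P B \<Longrightarrow> B \<le> B' \<Longrightarrow> W P B'"
    and fin: "\<And>P B. W P B \<Longrightarrow> \<exists>M. \<forall>P'. agree M P P' \<longrightarrow> W P' B"
    and all: "\<And>P. \<exists>B. W P B"
  shows "\<exists>B. \<forall>P. W P B"
proof (rule ccontr)
  assume "\<not> (\<exists>B. \<forall>P. W P B)"
  then have "\<forall>B. \<exists>P. \<not> W P B" by blast
  then obtain Q where Q: "\<And>B. \<not> W (Q B) B" by metis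
  obtain P where P: "\<And>m. infinite {B. agree m P (Q B)}" using koenig_seq by blast
  obtain B0 where B0: "W P B0" using all by blast
  obtain M where M: "\<forall>P'. agree M P P' \<longrightarrow> W P' B0" using fin[OF B0] by blast
  obtain B where B: "B \<in> {B. agree M P (Q B)}" "B0 \<le> B"
    using P[of M] by (meson infinite_nat_iff_unbounded_le)
  then have "W (Q B) B0" using M by simp
  then have "W (Q B) B" using B(2) mono by blast
  then show False using Q by blast
qed

definition Wit :: "nat set \<Rightarrow> nat set \<Rightarrow> rf \<Rightarrow> nat \<Rightarrow> nat \<Rightarrow> bool" where
  "Wit F S d n y \<longleftrightarrow> (\<exists>E k x. E \<subseteq> S \<inter> {..<k} \<and> n \<le> x \<and> x < y \<and>
      (\<forall>T. agree k (F \<union> E) T \<longrightarrow> ev T d [2*x] 1 \<and> ev T d [2*y+1] 1))"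

definition bad :: "(nat \<Rightarrow> nat) \<Rightarrow> rf \<Rightarrow> nat set \<Rightarrow> bool" where
  "bad mu d G \<longleftrightarrow> (\<exists>Y. (\<forall>n. ev G d [n] (if n \<in> Y then 1 else 0)) \<and>
     (\<exists>HL HR. Y = join HL HR \<and> infinite HL \<and> infinite HR \<and>
        (\<forall>x\<in>HL. \<forall>y\<in>HR. x < y \<longrightarrow> mu x \<le> y)))"

lemma witA:
  assumes w: "\<forall>T. agree k S T \<longrightarrow> ev T d [2*x] 1 \<and> ev T d [2*y+1] 1"
    and g: "agree k S G" and xy: "x < y" and mu: "y < mu x"
  shows "\<not> bad mu d G"
proof
  assume "bad mu d G"
  then obtain Y HL HR where Y: "\<forall>n. ev G d [n] (if n \<in> Y then 1 else 0)"
    and J: "Y = join HL HR" and H: "\<forall>x\<in>HL. \<forall>y\<in>HR. x < y \<longrightarrow> mu x \<le> y"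
    unfolding bad_def by blast
  have e1: "ev G d [2*x] 1" and e2: "ev G d [2*y+1] 1" using w g by auto
  have "(if 2*x \<in> Y then 1 else 0) = (1::nat)" using ev_det'[OF Y[rule_format, of "2*x"] e1] .
  then have "2*x \<in> Y" by (cases "2*x \<in> Y") auto
  then have hx: "x \<in> HL" using J join_even by simp
  have "(if 2*y+1 \<in> Y then 1 else 0) = (1::nat)" using ev_det'[OF Y[rule_format, of "2*y+1"] e2] .
  then have "2*y+1 \<in> Y" by (cases "2*y+1 \<in> Y") auto
  then have hy: "y \<in> HR" using J join_odd by simp
  show False using H hx hy xy mu by fastforce
qed

lemma witB:
  assumes nw: "\<not> (\<exists>y. Wit F S d n y)" and FG: "F \<subseteq> G" and GS: "G - F \<subseteq> S"
  shows "\<not> bad mu d G"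
proof
  assume "bad mu d G"
  then obtain Y HL HR where Y: "\<forall>n. ev G d [n] (if n \<in> Y then 1 else 0)"
    and J: "Y = join HL HR" and iL: "infinite HL" and iR: "infinite HR"
    unfolding bad_def by blast
  obtain x where x: "x \<in> HL" "n \<le> x" using iL by (meson infinite_nat_iff_unbounded_le)
  obtain y where y: "y \<in> HR" "Suc x \<le> y" using iR by (meson infinite_nat_iff_unbounded_le)
  have e1: "ev G d [2*x] 1" using Y[rule_format, of "2*x"] x J join_even by simp
  have e2: "ev G d [2*y+1] 1" using Y[rule_format, of "2*y+1"] y J join_odd by simp
  obtain k1 where k1: "\<forall>T. agree k1 G T \<longrightarrow> ev T d [2*x] 1" using ev_use[OF e1] by blast
  obtain k2 where k2: "\<forall>T. agree k2 G T \<longrightarrow> ev T d [2*y+1] 1" using ev_use[OF e2] by blast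
  define k where "k = k1 + k2"
  define E where "E = (G - F) \<inter> {..<k}"
  have ag: "agree k (F \<union> E) T \<longleftrightarrow> agree k G T" for T
  proof -
    have "(F \<union> E) \<inter> {..<k} = G \<inter> {..<k}" unfolding E_def using FG by blast
    then show ?thesis unfolding agree_def by simp
  qed
  have "Wit F S d n y"
    unfolding Wit_def
  proof (intro exI conjI allI impI)
    show "E \<subseteq> S \<inter> {..<k}" unfolding E_def using GS by blast
    show "n \<le> x" by fact
    show "x < y" using y by simp
  next
    fix T assume "agree k (F \<union> E) T"
    then have T: "agree k G T" using ag by simp
    show "ev T d [2*x] 1" using k1 agree_mono[OF T] unfolding k_def by simp
  next
    fix T assume "agree k (F \<union> E) T"
    then have T: "agree k G T" using ag by simp
    show "ev T d [2*y+1] 1" using k2 agree_mono[OF T] unfolding k_def by simp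
  qed
  then show False using nw by blast
qed




datatype hist = Base | Cut nat hist | Split "nat list" "nat list" rf rf nat hist

instance hist :: countable by countable_datatype

primrec interp :: "hist \<Rightarrow> nat set" where
  "interp Base = UNIV"
| "interp (Cut m h) = interp h \<inter> {m<..}"
| "interp (Split f0 f1 d0 d1 n h) = (let R = interp h;
      P = (SOME P. \<forall>y. \<not> Wit (set f0) (R \<inter> P) d0 n y \<and> \<not> Wit (set f1) (R - P) d1 n y)
    in if infinite (R \<inter> P) then R \<inter> P else R - P)"

definition W2 :: "nat list \<Rightarrow> nat list \<Rightarrow> rf \<Rightarrow> rf \<Rightarrow> nat set \<Rightarrow> nat \<Rightarrow> nat set \<Rightarrow> nat \<Rightarrow> bool" where
  "W2 f0 f1 d0 d1 R n P B \<longleftrightarrow> (\<exists>y\<le>B. Wit (set f0) (R \<inter> P) d0 n y \<or> Wit (set f1) (R - P) d1 n y)"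

definition g :: "nat list \<times> nat list \<times> rf \<times> rf \<times> hist \<Rightarrow> nat \<Rightarrow> nat" where
  "g key n = (case key of (f0, f1, d0, d1, h) \<Rightarrow>
     (if \<exists>B. \<forall>P. W2 f0 f1 d0 d1 (interp h) n P B then LEAST B. \<forall>P. W2 f0 f1 d0 d1 (interp h) n P B else 0)
   + (if \<exists>y. Wit (set f0) (interp h) d0 n y then LEAST y. Wit (set f0) (interp h) d0 n y else 0))"

definition mu :: "nat \<Rightarrow> nat" where
  "mu n = (\<Sum>i\<le>n. Suc (\<Sum>j\<le>i. g (from_nat j) i))"

lemma mu_mono: "n \<le> m \<Longrightarrow> mu n \<le> mu m"
  unfolding mu_def by (rule sum_mono2) auto

lemma mu_dom: assumes "to_nat key \<le> n" shows "g key n < mu n"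
proof -
  have "g key n = g (from_nat (to_nat key)) n" by simp
  also have "\<dots> \<le> (\<Sum>j\<le>n. g (from_nat j) n)" using assms by (intro member_le_sum) auto
  also have "\<dots> < Suc (\<Sum>j\<le>n. g (from_nat j) n)" by simp
  also have "\<dots> \<le> mu n" unfolding mu_def by (rule member_le_sum[where f = "\<lambda>i. Suc (\<Sum>j\<le>i. g (from_nat j) i)"]) auto
  finally show ?thesis .
qed

lemma g_wit:
  assumes "Wit (set f0) (interp h) d0 n y"
  shows "(LEAST y. Wit (set f0) (interp h) d0 n y) \<le> g (f0, f1, d0, d1, h) n"
  using assms unfolding g_def by auto

lemma g_W2:
  assumes "\<forall>P. W2 f0 f1 d0 d1 (interp h) n P B"
  shows "(LEAST B. \<forall>P. W2 f0 f1 d0 d1 (interp h) n P B) \<le> g (f0, f1, d0, d1, h) n"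
  using assms unfolding g_def by (auto intro: exI[of _ B])

lemma chain:
  fixes F R :: "nat \<Rightarrow> nat set"
  assumes F: "\<And>s. F s \<subseteq> F (Suc s)" and FR: "\<And>s. F (Suc s) - F s \<subseteq> R s"
    and R: "\<And>s. R (Suc s) \<subseteq> R s"
  shows "F s \<subseteq> (\<Union>t. F t)" "(\<Union>t. F t) - F s \<subseteq> R s"
proof -
  show "F s \<subseteq> (\<Union>t. F t)" by blast
  have tl: "F t - F s \<subseteq> R s" if "s \<le> t" for t
    using that
  proof (induction t rule: dec_induct)
    case base then show ?case by simp
  next
    case (step t)
    have "R t \<subseteq> R s" using lift_Suc_antimono_le[of R, OF R step(1)] .
    then show ?case using step FR[of t] by blast
  qed
  show "(\<Union>t. F t) - F s \<subseteq> R s"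
  proof
    fix a assume "a \<in> (\<Union>t. F t) - F s"
    then obtain t where a: "a \<in> F t" "a \<notin> F s" by blast
    show "a \<in> R s"
    proof (cases "t \<le> s")
      case True then have "F t \<subseteq> F s" using lift_Suc_mono_le[of F, OF F] by blast
      then show ?thesis using a by blast
    next
      case False then show ?thesis using tl[of t] a by auto
    qed
  qed
qed

lemma infinite_interp_Cut: "infinite (interp h) \<Longrightarrow> infinite (interp (Cut k h))"
proof -
  assume i: "infinite (interp h)"
  have "interp h \<subseteq> interp (Cut k h) \<union> {..k}" by auto
  then show ?thesis using i by (meson finite_UnI finite_atMost finite_subset)
qed




lemma agree_of:
  assumes "S \<subseteq> G" "G - S \<subseteq> {k<..}"
  shows "agree k S G"
  unfolding agree_def using assms by auto

lemma req1:
  assumes below: "\<forall>a\<in>set fl. \<forall>r\<in>interp h. a < r"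
  shows "\<exists>fl' k. set fl \<subseteq> set fl' \<and> set fl' - set fl \<subseteq> interp h \<inter> {..<k}
     \<and> (\<forall>a\<in>set fl'. \<forall>r\<in>interp (Cut k h). a < r)
     \<and> (\<forall>G. set fl' \<subseteq> G \<and> G - set fl' \<subseteq> interp (Cut k h) \<longrightarrow> \<not> bad mu d G)"
proof -
  define key where "key = (fl, fl, d, d, h)"
  define n where "n = to_nat key"
  show ?thesis
  proof (cases "\<exists>y. Wit (set fl) (interp h) d n y")
    case True
    define y0 where "y0 = (LEAST y. Wit (set fl) (interp h) d n y)"
    have W: "Wit (set fl) (interp h) d n y0" unfolding y0_def using True by (rule LeastI_ex)
    have "y0 \<le> g key n" unfolding y0_def key_def using True g_wit by blast
    also have "\<dots> < mu n" using mu_dom unfolding n_def by simp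
    finally have y0mu: "y0 < mu n" .
    obtain E k x where E: "E \<subseteq> interp h \<inter> {..<k}" and nx: "n \<le> x" and xy: "x < y0"
      and ev: "\<forall>T. agree k (set fl \<union> E) T \<longrightarrow> ev T d [2*x] 1 \<and> ev T d [2*y0+1] 1"
      using W unfolding Wit_def by blast
    have fE: "finite E" using E by (meson finite_Int finite_lessThan finite_subset inf.bounded_iff)
    define fl' where "fl' = sorted_list_of_set (set fl \<union> E)"
    have sfl: "set fl' = set fl \<union> E" unfolding fl'_def using fE by simp
    have ymu: "y0 < mu x" using y0mu mu_mono[OF nx] by simp
    show ?thesis
    proof (intro exI conjI allI impI)
      show "set fl \<subseteq> set fl'" using sfl by simp
      show "set fl' - set fl \<subseteq> interp h \<inter> {..<k}" using sfl E by auto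
      show "\<forall>a\<in>set fl'. \<forall>r\<in>interp (Cut k h). a < r"
      proof (intro ballI)
        fix a r assume a: "a \<in> set fl'" and r: "r \<in> interp (Cut k h)"
        then have r1: "r \<in> interp h" "k < r" by auto
        show "a < r"
        proof (cases "a \<in> set fl")
          case True then show ?thesis using below r1 by blast
        next
          case False then have "a \<in> E" using a sfl by auto
          then have "a < k" using E by auto
          then show ?thesis using r1 by simp
        qed
      qed
    next
      fix G assume G: "set fl' \<subseteq> G \<and> G - set fl' \<subseteq> interp (Cut k h)"
      have "agree k (set fl \<union> E) G" using G sfl by (intro agree_of) auto
      then show "\<not> bad mu d G" using witA[of k "set fl \<union> E" d x y0 G mu] ev xy ymu by blast
    qed
  next
    case False
    show ?thesis
    proof (intro exI conjI allI impI)
      show "set fl \<subseteq> set fl" by simp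
      show "set fl - set fl \<subseteq> interp h \<inter> {..<0}" by simp
      show "\<forall>a\<in>set fl. \<forall>r\<in>interp (Cut 0 h). a < r" using below by simp
    next
      fix G assume G: "set fl \<subseteq> G \<and> G - set fl \<subseteq> interp (Cut 0 h)"
      then have "G - set fl \<subseteq> interp h" by auto
      then show "\<not> bad mu d G" using witB[of "set fl" "interp h" d n G mu] False G by blast
    qed
  qed
qed

definition Inv1 :: "(nat \<Rightarrow> bool) \<Rightarrow> bool \<Rightarrow> nat \<Rightarrow> nat list \<times> hist \<Rightarrow> bool" where
  "Inv1 p b s c \<longleftrightarrow> (case c of (fl, h) \<Rightarrow> infinite (interp h) \<and> interp h \<subseteq> {x. p x = b}
     \<and> (\<forall>a\<in>set fl. p a = b) \<and> (\<forall>a\<in>set fl. \<forall>r\<in>interp h. a < r) \<and> (\<forall>r\<in>interp h. s \<le> r))"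

definition Q1 :: "nat \<Rightarrow> nat list \<times> hist \<Rightarrow> nat list \<times> hist \<Rightarrow> bool" where
  "Q1 s c c' \<longleftrightarrow> (case c of (fl, h) \<Rightarrow> case c' of (fl', h') \<Rightarrow>
     set fl \<subseteq> set fl' \<and> set fl' - set fl \<subseteq> interp h \<and> interp h' \<subseteq> interp h \<and> (\<exists>a\<in>set fl'. s \<le> a)
     \<and> (\<forall>G. set fl' \<subseteq> G \<and> G - set fl' \<subseteq> interp h' \<longrightarrow> \<not> bad mu (from_nat s) G))"

lemma step1:
  assumes "Inv1 p b s (fl, h)"
  shows "\<exists>c'. Inv1 p b (Suc s) c' \<and> Q1 s (fl, h) c'"
proof -
  have inf: "infinite (interp h)" and sub: "interp h \<subseteq> {x. p x = b}"
    and pfl: "\<forall>a\<in>set fl. p a = b" and below: "\<forall>a\<in>set fl. \<forall>r\<in>interp h. a < r"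
    and sr: "\<forall>r\<in>interp h. s \<le> r"
    using assms unfolding Inv1_def by auto
  obtain fl1 k where f1: "set fl \<subseteq> set fl1" and f2: "set fl1 - set fl \<subseteq> interp h \<inter> {..<k}"
    and f3: "\<forall>a\<in>set fl1. \<forall>r\<in>interp (Cut k h). a < r"
    and f4: "\<forall>G. set fl1 \<subseteq> G \<and> G - set fl1 \<subseteq> interp (Cut k h) \<longrightarrow> \<not> bad mu (from_nat s) G"
    using req1[OF below, of "from_nat s"] by (elim exE conjE) (rule that)
  have inf1: "infinite (interp (Cut k h))" using infinite_interp_Cut[OF inf] .
  then obtain a where a: "a \<in> interp (Cut k h)" "s \<le> a" by (meson infinite_nat_iff_unbounded_le)
  define fl' where "fl' = a # fl1"
  define h' where "h' = Cut (a + s) (Cut k h)"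
  have Ih': "interp h' \<subseteq> interp (Cut k h)" unfolding h'_def by auto
  have "Inv1 p b (Suc s) (fl', h')"
    unfolding Inv1_def
  proof (clarsimp, intro conjI)
    show "infinite (interp h')" unfolding h'_def using infinite_interp_Cut[OF inf1] .
    show "interp h' \<subseteq> {x. p x = b}" using Ih' sub by auto
    show "\<forall>x\<in>set fl'. p x = b" unfolding fl'_def using pfl f2 a sub by auto
    show "\<forall>x\<in>set fl'. \<forall>r\<in>interp h'. x < r" unfolding fl'_def h'_def using f3 by auto
    show "\<forall>r\<in>interp h'. Suc s \<le> r" unfolding h'_def by auto
  qed
  moreover have "Q1 s (fl, h) (fl', h')"
    unfolding Q1_def
  proof (clarsimp, intro conjI)
    show "set fl \<subseteq> set fl'" unfolding fl'_def using f1 by auto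
    show "set fl' - set fl \<subseteq> interp h" unfolding fl'_def using f2 a by auto
    show "interp h' \<subseteq> interp h" using Ih' by auto
    show "\<exists>x\<in>set fl'. s \<le> x" unfolding fl'_def using a by auto
    show "\<forall>G. set fl' \<subseteq> G \<and> G - set fl' \<subseteq> interp h' \<longrightarrow> \<not> bad mu (from_nat s) G"
    proof (intro allI impI)
      fix G assume G: "set fl' \<subseteq> G \<and> G - set fl' \<subseteq> interp h'"
      have "set fl1 \<subseteq> G" using G unfolding fl'_def by auto
      moreover have "G - set fl1 \<subseteq> interp (Cut k h)" using G Ih' a unfolding fl'_def by auto
      ultimately show "\<not> bad mu (from_nat s) G" using f4 by blast
    qed
  qed
  ultimately show ?thesis by blast
qed

lemma one_sided:
  fixes p :: "nat \<Rightarrow> bool"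
  assumes sub: "interp h0 \<subseteq> {x. p x = b}" and inf: "infinite (interp h0)"
  shows "\<exists>G. infinite G \<and> (\<forall>x\<in>G. p x = b) \<and> (\<forall>d. \<not> bad mu d G)"
proof -
  have I0: "Inv1 p b 0 ([], h0)" unfolding Inv1_def using sub inf by auto
  have "\<exists>f. \<forall>n. Inv1 p b n (f n) \<and> Q1 n (f n) (f (Suc n))"
  proof (rule dependent_nat_choice)
    show "\<exists>x. Inv1 p b 0 x" using I0 by blast
  next
    fix x n assume a: "Inv1 p b n x"
    obtain fl h where x: "x = (fl, h)" by (cases x)
    show "\<exists>y. Inv1 p b (Suc n) y \<and> Q1 n x y" using step1[of p b n fl h] a x by simp
  qed
  then obtain f where f: "\<And>n. Inv1 p b n (f n)" "\<And>n. Q1 n (f n) (f (Suc n))" by blast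
  define F where "F s = set (fst (f s))" for s
  define R where "R s = interp (snd (f s))" for s
  have Q: "F s \<subseteq> F (Suc s) \<and> F (Suc s) - F s \<subseteq> R s \<and> R (Suc s) \<subseteq> R s \<and> (\<exists>a\<in>F (Suc s). s \<le> a)
     \<and> (\<forall>G. F (Suc s) \<subseteq> G \<and> G - F (Suc s) \<subseteq> R (Suc s) \<longrightarrow> \<not> bad mu (from_nat s) G)" for s
  proof -
    obtain a1 b1 where 1: "f s = (a1, b1)" by (cases "f s")
    obtain a2 b2 where 2: "f (Suc s) = (a2, b2)" by (cases "f (Suc s)")
    show ?thesis using f(2)[of s] unfolding Q1_def F_def R_def 1 2 by simp
  qed
  have Pb: "\<forall>a\<in>F s. p a = b" for s
  proof -
    obtain a1 b1 where 1: "f s = (a1, b1)" by (cases "f s")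
    show ?thesis using f(1)[of s] unfolding Inv1_def F_def 1 by simp
  qed
  define G where "G = (\<Union>t. F t)"
  have ch1: "F s \<subseteq> G" and ch2: "G - F s \<subseteq> R s" for s
    using chain[of F R s] Q unfolding G_def by auto
  show ?thesis
  proof (intro exI conjI allI ballI)
    show "infinite G" unfolding infinite_nat_iff_unbounded_le
    proof
      fix m
      obtain a where "a \<in> F (Suc m)" "m \<le> a" using Q[of m] by blast
      then show "\<exists>n\<ge>m. n \<in> G" using ch1 by blast
    qed
    show "p x = b" if "x \<in> G" for x using that Pb unfolding G_def by blast
    fix d
    show "\<not> bad mu d G" using Q[of "to_nat d"] ch1 ch2 by simp
  qed
qed




lemma Wit_fin: "Wit F S d n y \<Longrightarrow> \<exists>k. \<forall>S'. S \<inter> {..<k} \<subseteq> S' \<longrightarrow> Wit F S' d n y"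
proof -
  assume "Wit F S d n y"
  then obtain E k x where E: "E \<subseteq> S \<inter> {..<k}" and r: "n \<le> x" "x < y"
    "\<forall>T. agree k (F \<union> E) T \<longrightarrow> ev T d [2*x] 1 \<and> ev T d [2*y+1] 1"
    unfolding Wit_def by blast
  show ?thesis
  proof (intro exI allI impI)
    fix S' assume "S \<inter> {..<k} \<subseteq> S'"
    then have "E \<subseteq> S' \<inter> {..<k}" using E by blast
    then show "Wit F S' d n y" unfolding Wit_def using r by blast
  qed
qed

lemma ext_wit:
  assumes W: "Wit (set fl) S d n y" and ymu: "y < mu n" and SR: "S \<subseteq> interp h"
    and below: "\<forall>a\<in>set fl. \<forall>r\<in>interp h. a < r"
  shows "\<exists>fl' k. set fl \<subseteq> set fl' \<and> set fl' - set fl \<subseteq> S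
     \<and> (\<forall>a\<in>set fl'. \<forall>r\<in>interp (Cut k h). a < r)
     \<and> (\<forall>G. set fl' \<subseteq> G \<and> G - set fl' \<subseteq> interp (Cut k h) \<longrightarrow> \<not> bad mu d G)"
proof -
  obtain E k x where E: "E \<subseteq> S \<inter> {..<k}" and nx: "n \<le> x" and xy: "x < y"
    and ev: "\<forall>T. agree k (set fl \<union> E) T \<longrightarrow> ev T d [2*x] 1 \<and> ev T d [2*y+1] 1"
    using W unfolding Wit_def by blast
  have fE: "finite E" using E by (meson finite_Int finite_lessThan finite_subset inf.bounded_iff)
  define fl' where "fl' = sorted_list_of_set (set fl \<union> E)"
  have sfl: "set fl' = set fl \<union> E" unfolding fl'_def using fE by simp
  have ymu': "y < mu x" using ymu mu_mono[OF nx] by simp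
  show ?thesis
  proof (intro exI conjI allI impI)
    show "set fl \<subseteq> set fl'" using sfl by simp
    show "set fl' - set fl \<subseteq> S" using sfl E by auto
    show "\<forall>a\<in>set fl'. \<forall>r\<in>interp (Cut k h). a < r"
    proof (intro ballI)
      fix a r assume a: "a \<in> set fl'" and r: "r \<in> interp (Cut k h)"
      then have r1: "r \<in> interp h" "k < r" by auto
      show "a < r"
      proof (cases "a \<in> set fl")
        case True then show ?thesis using below r1 by blast
      next
        case False then have "a \<in> E" using a sfl by auto
        then have "a < k" using E by auto
        then show ?thesis using r1 by simp
      qed
    qed
  next
    fix G assume G: "set fl' \<subseteq> G \<and> G - set fl' \<subseteq> interp (Cut k h)"
    have "agree k (set fl \<union> E) G" using G sfl by (intro agree_of) auto
    then show "\<not> bad mu d G" using witA[of k "set fl \<union> E" d x y G mu] ev xy ymu' by blast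
  qed
qed

definition sat :: "nat list \<Rightarrow> hist \<Rightarrow> rf \<Rightarrow> bool" where
  "sat fl h d \<longleftrightarrow> (\<forall>G. set fl \<subseteq> G \<and> G - set fl \<subseteq> interp h \<longrightarrow> \<not> bad mu d G)"

lemma req2:
  fixes p :: "nat \<Rightarrow> bool"
  assumes inf: "infinite (interp h)"
    and below0: "\<forall>a\<in>set fl0. \<forall>r\<in>interp h. a < r"
    and below1: "\<forall>a\<in>set fl1. \<forall>r\<in>interp h. a < r"
  shows "\<exists>fl0' fl1' h'. interp h' \<subseteq> interp h \<and> infinite (interp h')
    \<and> set fl0 \<subseteq> set fl0' \<and> set fl0' - set fl0 \<subseteq> interp h \<inter> {x. \<not> p x}
    \<and> set fl1 \<subseteq> set fl1' \<and> set fl1' - set fl1 \<subseteq> interp h \<inter> {x. p x}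
    \<and> (\<forall>a\<in>set fl0'. \<forall>r\<in>interp h'. a < r) \<and> (\<forall>a\<in>set fl1'. \<forall>r\<in>interp h'. a < r)
    \<and> (sat fl0' h' d0 \<or> sat fl1' h' d1)"
proof -
  define key where "key = (fl0, fl1, d0, d1, h)"
  define n where "n = to_nat key"
  define R where "R = interp h"
  define W where "W = W2 fl0 fl1 d0 d1 R n"
  show ?thesis
  proof (cases "\<forall>P. \<exists>B. W P B")
    case True
    have "\<exists>B. \<forall>P. W P B"
    proof (rule compactness)
      show "W P B'" if "W P B" "B \<le> B'" for P B B'
        using that unfolding W_def W2_def by (meson order_trans)
      show "\<exists>B. W P B" for P using True by blast
      show "\<exists>M. \<forall>P'. agree M P P' \<longrightarrow> W P' B" if "W P B" for P B
      proof -
        from that obtain y where y: "y \<le> B" and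
          w: "Wit (set fl0) (R \<inter> P) d0 n y \<or> Wit (set fl1) (R - P) d1 n y"
          unfolding W_def W2_def by blast
        from w show ?thesis
        proof
          assume "Wit (set fl0) (R \<inter> P) d0 n y"
          then obtain k where k: "\<forall>S'. (R \<inter> P) \<inter> {..<k} \<subseteq> S' \<longrightarrow> Wit (set fl0) S' d0 n y"
            using Wit_fin by blast
          show ?thesis
          proof (intro exI allI impI)
            fix P' assume "agree k P P'"
            then have "(R \<inter> P) \<inter> {..<k} \<subseteq> R \<inter> P'" unfolding agree_def by blast
            then show "W P' B" using k y unfolding W_def W2_def by blast
          qed
        next
          assume "Wit (set fl1) (R - P) d1 n y"
          then obtain k where k: "\<forall>S'. (R - P) \<inter> {..<k} \<subseteq> S' \<longrightarrow> Wit (set fl1) S' d1 n y"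
            using Wit_fin by blast
          show ?thesis
          proof (intro exI allI impI)
            fix P' assume "agree k P P'"
            then have "(R - P) \<inter> {..<k} \<subseteq> R - P'" unfolding agree_def by blast
            then show "W P' B" using k y unfolding W_def W2_def by blast
          qed
        qed
      qed
    qed
    then have ex: "\<exists>B. \<forall>P. W2 fl0 fl1 d0 d1 (interp h) n P B" unfolding W_def R_def .
    define B0 where "B0 = (LEAST B. \<forall>P. W2 fl0 fl1 d0 d1 (interp h) n P B)"
    have WB0: "\<forall>P. W2 fl0 fl1 d0 d1 (interp h) n P B0" unfolding B0_def using ex by (rule LeastI_ex)
    have "B0 \<le> g key n" unfolding B0_def key_def using ex g_W2 by blast
    also have "\<dots> < mu n" using mu_dom unfolding n_def by simp
    finally have B0mu: "B0 < mu n" .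
    from WB0[rule_format, of "{x. \<not> p x}"] obtain y where y: "y \<le> B0" and
      w: "Wit (set fl0) (interp h \<inter> {x. \<not> p x}) d0 n y \<or> Wit (set fl1) (interp h - {x. \<not> p x}) d1 n y"
      unfolding W2_def by blast
    have ymu: "y < mu n" using y B0mu by simp
    from w show ?thesis
    proof
      assume w0: "Wit (set fl0) (interp h \<inter> {x. \<not> p x}) d0 n y"
      obtain fl' k where e1: "set fl0 \<subseteq> set fl'" and e2: "set fl' - set fl0 \<subseteq> interp h \<inter> {x. \<not> p x}"
        and e3: "\<forall>a\<in>set fl'. \<forall>r\<in>interp (Cut k h). a < r"
        and e4: "\<forall>G. set fl' \<subseteq> G \<and> G - set fl' \<subseteq> interp (Cut k h) \<longrightarrow> \<not> bad mu d0 G"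
        using ext_wit[OF w0 ymu _ below0] by (auto elim!: exE conjE intro: that)
      have c1: "interp (Cut k h) \<subseteq> interp h" by auto
      have c2: "infinite (interp (Cut k h))" using infinite_interp_Cut[OF inf] .
      have c3: "sat fl' (Cut k h) d0 \<or> sat fl1 (Cut k h) d1" unfolding sat_def using e4 by blast
      have c4: "\<forall>a\<in>set fl1. \<forall>r\<in>interp (Cut k h). a < r" using below1 by auto
      have c5: "set fl1 \<subseteq> set fl1" and c6: "set fl1 - set fl1 \<subseteq> interp h \<inter> {x. p x}" by auto
      show ?thesis
        by (rule exI[of _ fl'], rule exI[of _ fl1], rule exI[of _ "Cut k h"], intro conjI) (fact c1 c2 c3 c4 c5 c6 e1 e2 e3)+
    next
      assume w1: "Wit (set fl1) (interp h - {x. \<not> p x}) d1 n y"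
      have w1': "Wit (set fl1) (interp h \<inter> {x. p x}) d1 n y"
      proof -
        have "interp h - {x. \<not> p x} = interp h \<inter> {x. p x}" by auto
        then show ?thesis using w1 by simp
      qed
      obtain fl' k where e1: "set fl1 \<subseteq> set fl'" and e2: "set fl' - set fl1 \<subseteq> interp h \<inter> {x. p x}"
        and e3: "\<forall>a\<in>set fl'. \<forall>r\<in>interp (Cut k h). a < r"
        and e4: "\<forall>G. set fl' \<subseteq> G \<and> G - set fl' \<subseteq> interp (Cut k h) \<longrightarrow> \<not> bad mu d1 G"
        using ext_wit[OF w1' ymu _ below1] by (auto elim!: exE conjE intro: that)
      have c1: "interp (Cut k h) \<subseteq> interp h" by auto
      have c2: "infinite (interp (Cut k h))" using infinite_interp_Cut[OF inf] .
      have c3: "sat fl0 (Cut k h) d0 \<or> sat fl' (Cut k h) d1" unfolding sat_def using e4 by blast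
      have c4: "\<forall>a\<in>set fl0. \<forall>r\<in>interp (Cut k h). a < r" using below0 by auto
      have c5: "set fl0 \<subseteq> set fl0" and c6: "set fl0 - set fl0 \<subseteq> interp h \<inter> {x. \<not> p x}" by auto
      show ?thesis
        by (rule exI[of _ fl0], rule exI[of _ fl'], rule exI[of _ "Cut k h"], intro conjI) (fact c1 c2 c3 c4 c5 c6 e1 e2 e3)+
    qed
  next
    case False
    then have exP: "\<exists>P. \<forall>y. \<not> Wit (set fl0) (R \<inter> P) d0 n y \<and> \<not> Wit (set fl1) (R - P) d1 n y"
      unfolding W_def W2_def by auto
    define P where "P = (SOME P. \<forall>y. \<not> Wit (set fl0) (R \<inter> P) d0 n y \<and> \<not> Wit (set fl1) (R - P) d1 n y)"
    have Pp: "\<forall>y. \<not> Wit (set fl0) (R \<inter> P) d0 n y \<and> \<not> Wit (set fl1) (R - P) d1 n y"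
      unfolding P_def using exP by (rule someI_ex)
    define h' where "h' = Split fl0 fl1 d0 d1 n h"
    have ih': "interp h' = (if infinite (R \<inter> P) then R \<inter> P else R - P)"
      unfolding h'_def P_def R_def by (simp add: Let_def)
    have sub: "interp h' \<subseteq> interp h" using ih' unfolding R_def by auto
    have inf': "infinite (interp h')"
    proof (cases "infinite (R \<inter> P)")
      case True then show ?thesis using ih' by simp
    next
      case False
      have "R = (R \<inter> P) \<union> (R - P)" by blast
      then have "infinite (R - P)" using False inf unfolding R_def by (metis finite_UnI)
      then show ?thesis using ih' False by simp
    qed
    have S: "sat fl0 h' d0 \<or> sat fl1 h' d1"
    proof (cases "infinite (R \<inter> P)")
      case True
      have "sat fl0 h' d0" unfolding sat_def
      proof (intro allI impI)
        fix G assume G: "set fl0 \<subseteq> G \<and> G - set fl0 \<subseteq> interp h'"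
        then show "\<not> bad mu d0 G" using witB[of "set fl0" "R \<inter> P" d0 n G mu] Pp ih' True by auto
      qed
      then show ?thesis by blast
    next
      case False
      have "sat fl1 h' d1" unfolding sat_def
      proof (intro allI impI)
        fix G assume G: "set fl1 \<subseteq> G \<and> G - set fl1 \<subseteq> interp h'"
        then show "\<not> bad mu d1 G" using witB[of "set fl1" "R - P" d1 n G mu] Pp ih' False by auto
      qed
      then show ?thesis by blast
    qed
    have b0: "\<forall>a\<in>set fl0. \<forall>r\<in>interp h'. a < r" using below0 sub by blast
    have b1: "\<forall>a\<in>set fl1. \<forall>r\<in>interp h'. a < r" using below1 sub by blast
    have c5: "set fl0 \<subseteq> set fl0" and c6: "set fl0 - set fl0 \<subseteq> interp h \<inter> {x. \<not> p x}" by auto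
    have c7: "set fl1 \<subseteq> set fl1" and c8: "set fl1 - set fl1 \<subseteq> interp h \<inter> {x. p x}" by auto
    show ?thesis
      by (rule exI[of _ fl0], rule exI[of _ fl1], rule exI[of _ h'], intro conjI) (fact S sub inf' b0 b1 c5 c6 c7 c8)+
  qed
qed




lemma sat_mono:
  assumes "sat fl h d" "set fl \<subseteq> set fl2" "set fl2 - set fl \<subseteq> interp h" "interp h2 \<subseteq> interp h"
  shows "sat fl2 h2 d"
  unfolding sat_def
proof (intro allI impI)
  fix G assume G: "set fl2 \<subseteq> G \<and> G - set fl2 \<subseteq> interp h2"
  have "set fl \<subseteq> G" using G assms(2) by blast
  moreover have "G - set fl \<subseteq> interp h" using G assms(3,4) by blast
  ultimately show "\<not> bad mu d G" using assms(1) unfolding sat_def by blast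
qed

definition Inv2 :: "(nat \<Rightarrow> bool) \<Rightarrow> nat \<Rightarrow> nat list \<times> nat list \<times> hist \<Rightarrow> bool" where
  "Inv2 p s c \<longleftrightarrow> (case c of (fl0, fl1, h) \<Rightarrow> infinite (interp h)
     \<and> (\<forall>a\<in>set fl0. \<not> p a) \<and> (\<forall>a\<in>set fl1. p a)
     \<and> (\<forall>a\<in>set fl0. \<forall>r\<in>interp h. a < r) \<and> (\<forall>a\<in>set fl1. \<forall>r\<in>interp h. a < r)
     \<and> (\<forall>r\<in>interp h. s \<le> r))"

definition Q2 :: "nat \<Rightarrow> nat list \<times> nat list \<times> hist \<Rightarrow> nat list \<times> nat list \<times> hist \<Rightarrow> bool" where
  "Q2 s c c' \<longleftrightarrow> (case c of (fl0, fl1, h) \<Rightarrow> case c' of (fl0', fl1', h') \<Rightarrow>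
     set fl0 \<subseteq> set fl0' \<and> set fl0' - set fl0 \<subseteq> interp h
     \<and> set fl1 \<subseteq> set fl1' \<and> set fl1' - set fl1 \<subseteq> interp h
     \<and> interp h' \<subseteq> interp h \<and> (\<exists>a\<in>set fl0'. s \<le> a) \<and> (\<exists>a\<in>set fl1'. s \<le> a)
     \<and> (sat fl0' h' (fst (from_nat s :: rf \<times> rf)) \<or> sat fl1' h' (snd (from_nat s :: rf \<times> rf))))"

lemma step2:
  fixes p :: "nat \<Rightarrow> bool"
  assumes allinf: "\<And>h. infinite (interp h) \<Longrightarrow> infinite (interp h \<inter> {x. p x}) \<and> infinite (interp h \<inter> {x. \<not> p x})"
    and I: "Inv2 p s (fl0, fl1, h)"
  shows "\<exists>c'. Inv2 p (Suc s) c' \<and> Q2 s (fl0, fl1, h) c'"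
proof -
  have inf: "infinite (interp h)" and p0: "\<forall>a\<in>set fl0. \<not> p a" and p1: "\<forall>a\<in>set fl1. p a"
    and b0: "\<forall>a\<in>set fl0. \<forall>r\<in>interp h. a < r" and b1: "\<forall>a\<in>set fl1. \<forall>r\<in>interp h. a < r"
    and sr: "\<forall>r\<in>interp h. s \<le> r"
    using I unfolding Inv2_def by auto
  define d0 where "d0 = fst (from_nat s :: rf \<times> rf)"
  define d1 where "d1 = snd (from_nat s :: rf \<times> rf)"
  obtain fl0' fl1' h1 where r1: "interp h1 \<subseteq> interp h" and r2: "infinite (interp h1)"
    and r3: "set fl0 \<subseteq> set fl0'" and r4: "set fl0' - set fl0 \<subseteq> interp h \<inter> {x. \<not> p x}"
    and r5: "set fl1 \<subseteq> set fl1'" and r6: "set fl1' - set fl1 \<subseteq> interp h \<inter> {x. p x}"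
    and r7: "\<forall>a\<in>set fl0'. \<forall>r\<in>interp h1. a < r" and r8: "\<forall>a\<in>set fl1'. \<forall>r\<in>interp h1. a < r"
    and r9: "sat fl0' h1 d0 \<or> sat fl1' h1 d1"
    using req2[OF inf b0 b1, of p d0 d1] by (elim exE conjE) (rule that)
  have "infinite (interp h1 \<inter> {x. \<not> p x})" using allinf[OF r2] by blast
  then obtain a0 where a0: "a0 \<in> interp h1" "\<not> p a0" "s \<le> a0"
    unfolding infinite_nat_iff_unbounded_le by blast
  have "infinite (interp h1 \<inter> {x. p x})" using allinf[OF r2] by blast
  then obtain a1 where a1: "a1 \<in> interp h1" "p a1" "s \<le> a1"
    unfolding infinite_nat_iff_unbounded_le by blast
  define h' where "h' = Cut (a0 + a1 + s) h1"
  have ih': "interp h' = interp h1 \<inter> {a0 + a1 + s<..}" unfolding h'_def by simp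
  have sub': "interp h' \<subseteq> interp h1" using ih' by blast
  have "Inv2 p (Suc s) (a0 # fl0', a1 # fl1', h')"
    unfolding Inv2_def
  proof (simp only: prod.case, intro conjI)
    show "infinite (interp h')" unfolding h'_def using infinite_interp_Cut[OF r2] .
    show "\<forall>a\<in>set (a0 # fl0'). \<not> p a" using p0 r4 a0 by auto
    show "\<forall>a\<in>set (a1 # fl1'). p a" using p1 r6 a1 by auto
    show "\<forall>a\<in>set (a0 # fl0'). \<forall>r\<in>interp h'. a < r" using r7 sub' ih' by auto
    show "\<forall>a\<in>set (a1 # fl1'). \<forall>r\<in>interp h'. a < r" using r8 sub' ih' by auto
    show "\<forall>r\<in>interp h'. Suc s \<le> r" using ih' by auto
  qed
  moreover have "Q2 s (fl0, fl1, h) (a0 # fl0', a1 # fl1', h')"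
    unfolding Q2_def
  proof (simp only: prod.case, intro conjI)
    show "set fl0 \<subseteq> set (a0 # fl0')" using r3 by auto
    show "set (a0 # fl0') - set fl0 \<subseteq> interp h" using r4 a0 r1 by auto
    show "set fl1 \<subseteq> set (a1 # fl1')" using r5 by auto
    show "set (a1 # fl1') - set fl1 \<subseteq> interp h" using r6 a1 r1 by auto
    show "interp h' \<subseteq> interp h" using sub' r1 by blast
    show "\<exists>a\<in>set (a0 # fl0'). s \<le> a" using a0 by auto
    show "\<exists>a\<in>set (a1 # fl1'). s \<le> a" using a1 by auto
    show "sat (a0 # fl0') h' (fst (from_nat s :: rf \<times> rf)) \<or> sat (a1 # fl1') h' (snd (from_nat s :: rf \<times> rf))"
    proof (cases "sat fl0' h1 d0")
      case True
      have "sat (a0 # fl0') h' d0" by (rule sat_mono[OF True]) (use a0 sub' in auto)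
      then show ?thesis unfolding d0_def by blast
    next
      case False
      then have S: "sat fl1' h1 d1" using r9 by blast
      have "sat (a1 # fl1') h' d1" by (rule sat_mono[OF S]) (use a1 sub' in auto)
      then show ?thesis unfolding d1_def by blast
    qed
  qed
  ultimately show ?thesis by blast
qed

lemma two_sided:
  fixes p :: "nat \<Rightarrow> bool"
  assumes allinf: "\<And>h. infinite (interp h) \<Longrightarrow> infinite (interp h \<inter> {x. p x}) \<and> infinite (interp h \<inter> {x. \<not> p x})"
  shows "\<exists>G b. infinite G \<and> (\<forall>x\<in>G. p x = b) \<and> (\<forall>d. \<not> bad mu d G)"
proof -
  have I0: "Inv2 p 0 ([], [], Base)" unfolding Inv2_def by auto
  have "\<exists>f. \<forall>n. Inv2 p n (f n) \<and> Q2 n (f n) (f (Suc n))"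
  proof (rule dependent_nat_choice)
    show "\<exists>x. Inv2 p 0 x" using I0 by blast
  next
    fix x n assume a: "Inv2 p n x"
    obtain fl0 fl1 h where x: "x = (fl0, fl1, h)" by (cases x)
    show "\<exists>y. Inv2 p (Suc n) y \<and> Q2 n x y" using step2[OF allinf, of n fl0 fl1 h] a x by simp
  qed
  then obtain f where f: "\<And>n. Inv2 p n (f n)" "\<And>n. Q2 n (f n) (f (Suc n))" by blast
  define F0 where "F0 s = set (fst (f s))" for s
  define F1 where "F1 s = set (fst (snd (f s)))" for s
  define R where "R s = interp (snd (snd (f s)))" for s
  define H where "H s = snd (snd (f s))" for s
  have Q: "F0 s \<subseteq> F0 (Suc s) \<and> F0 (Suc s) - F0 s \<subseteq> R s \<and> F1 s \<subseteq> F1 (Suc s) \<and> F1 (Suc s) - F1 s \<subseteq> R s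
     \<and> R (Suc s) \<subseteq> R s \<and> (\<exists>a\<in>F0 (Suc s). s \<le> a) \<and> (\<exists>a\<in>F1 (Suc s). s \<le> a)
     \<and> (sat (fst (f (Suc s))) (H (Suc s)) (fst (from_nat s :: rf \<times> rf)) \<or> sat (fst (snd (f (Suc s)))) (H (Suc s)) (snd (from_nat s :: rf \<times> rf)))" for s
  proof -
    obtain a1 b1 c1 where 1: "f s = (a1, b1, c1)" by (cases "f s")
    obtain a2 b2 c2 where 2: "f (Suc s) = (a2, b2, c2)" by (cases "f (Suc s)")
    show ?thesis using f(2)[of s] unfolding Q2_def F0_def F1_def R_def H_def 1 2 by simp
  qed
  have P: "(\<forall>a\<in>F0 s. \<not> p a) \<and> (\<forall>a\<in>F1 s. p a)" for s
  proof -
    obtain a1 b1 c1 where 1: "f s = (a1, b1, c1)" by (cases "f s")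
    show ?thesis using f(1)[of s] unfolding Inv2_def F0_def F1_def 1 by simp
  qed
  define G0 where "G0 = (\<Union>t. F0 t)"
  define G1 where "G1 = (\<Union>t. F1 t)"
  have c01: "F0 s \<subseteq> G0" and c02: "G0 - F0 s \<subseteq> R s" for s
    using chain[of F0 R s] Q unfolding G0_def by auto
  have c11: "F1 s \<subseteq> G1" and c12: "G1 - F1 s \<subseteq> R s" for s
    using chain[of F1 R s] Q unfolding G1_def by auto
  have inf0: "infinite G0" unfolding infinite_nat_iff_unbounded_le
  proof
    fix m
    obtain a where "a \<in> F0 (Suc m)" "m \<le> a" using Q[of m] by blast
    then show "\<exists>n\<ge>m. n \<in> G0" using c01 by blast
  qed
  have inf1: "infinite G1" unfolding infinite_nat_iff_unbounded_le
  proof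
    fix m
    obtain a where "a \<in> F1 (Suc m)" "m \<le> a" using Q[of m] by blast
    then show "\<exists>n\<ge>m. n \<in> G1" using c11 by blast
  qed
  have either: "\<not> bad mu d0 G0 \<or> \<not> bad mu d1 G1" for d0 d1
  proof -
    define s where "s = to_nat (d0, d1)"
    have fs: "from_nat s = (d0, d1)" unfolding s_def by simp
    have eq0: "F0 (Suc s) = set (fst (f (Suc s)))" "F1 (Suc s) = set (fst (snd (f (Suc s))))"
      "R (Suc s) = interp (H (Suc s))" unfolding F0_def F1_def R_def H_def by auto
    from Q[of s] have "sat (fst (f (Suc s))) (H (Suc s)) d0 \<or> sat (fst (snd (f (Suc s)))) (H (Suc s)) d1"
      using fs by simp
    then show ?thesis
    proof
      assume "sat (fst (f (Suc s))) (H (Suc s)) d0"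
      then have "\<not> bad mu d0 G0" unfolding sat_def using c01[of "Suc s"] c02[of "Suc s"] eq0 by auto
      then show ?thesis by blast
    next
      assume "sat (fst (snd (f (Suc s)))) (H (Suc s)) d1"
      then have "\<not> bad mu d1 G1" unfolding sat_def using c11[of "Suc s"] c12[of "Suc s"] eq0 by auto
      then show ?thesis by blast
    qed
  qed
  show ?thesis
  proof (cases "\<forall>d. \<not> bad mu d G0")
    case True
    have "\<forall>x\<in>G0. p x = False" using P unfolding G0_def by blast
    then show ?thesis using True inf0 by blast
  next
    case False
    then obtain d0 where "bad mu d0 G0" by blast
    then have "\<forall>d. \<not> bad mu d G1" using either by blast
    moreover have "\<forall>x\<in>G1. p x = True" using P unfolding G1_def by blast
    ultimately show ?thesis using inf1 by blast
  qed
qed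

lemma main_lemma:
  fixes p :: "nat \<Rightarrow> bool"
  shows "\<exists>G b. infinite G \<and> (\<forall>x\<in>G. p x = b) \<and> (\<forall>d. \<not> bad mu d G)"
proof (cases "\<forall>h. infinite (interp h) \<longrightarrow> infinite (interp h \<inter> {x. p x}) \<and> infinite (interp h \<inter> {x. \<not> p x})")
  case True
  then show ?thesis using two_sided[of p] by blast
next
  case False
  then obtain h where inf: "infinite (interp h)"
    and fin2: "finite (interp h \<inter> {x. p x}) \<or> finite (interp h \<inter> {x. \<not> p x})"
    by blast
  have "\<exists>c. finite (interp h \<inter> {x. p x = c})"
  proof (cases "finite (interp h \<inter> {x. p x})")
    case True then show ?thesis by (intro exI[of _ True]) simp
  next
    case False then have "finite (interp h \<inter> {x. \<not> p x})" using fin2 by blast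
    then show ?thesis by (intro exI[of _ False]) simp
  qed
  then obtain c where fin: "finite (interp h \<inter> {x. p x = c})" by blast
  obtain m where m: "\<forall>x\<in>interp h \<inter> {x. p x = c}. x \<le> m"
    using fin finite_nat_set_iff_bounded_le by blast
  have sub: "interp (Cut m h) \<subseteq> {x. p x = (\<not> c)}"
  proof
    fix x assume "x \<in> interp (Cut m h)"
    then have x: "x \<in> interp h" "m < x" by auto
    have "p x \<noteq> c"
    proof
      assume "p x = c"
      then have "x \<le> m" using m x(1) by blast
      then show False using x(2) by simp
    qed
    then show "x \<in> {x. p x = (\<not> c)}" by auto
  qed
  obtain G where "infinite G" "\<forall>x\<in>G. p x = (\<not> c)" "\<forall>d. \<not> bad mu d G"
    using one_sided[OF sub infinite_interp_Cut[OF inf]] by blast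
  then show ?thesis by blast
qed




definition Xmu :: "nat set" where
  "Xmu = {prod_encode (x, y) | x y. x < y \<and> mu x \<le> y}"

lemma colX: "col_of Xmu x y \<longleftrightarrow> x < y \<and> mu x \<le> y"
  unfolding col_of_def Xmu_def by (auto simp: prod_encode_eq)

lemma Xmu_stable: "stable_instance Xmu"
  unfolding stable_instance_def
proof
  show "coloring_code Xmu" unfolding coloring_code_def Xmu_def by blast
  show "stable (col_of Xmu)" unfolding stable_def
  proof
    fix x
    have "\<forall>\<^sub>F u in sequentially. col_of Xmu x u = True"
      unfolding eventually_sequentially
      by (intro exI[of _ "Suc x + mu x"]) (auto simp: colX)
    then show "\<exists>b. \<forall>\<^sub>F u in sequentially. col_of Xmu x u = b" by blast
  qed
qed

theorem theorem1p7:
  shows "\<not> sc_reducible stable_instance SIPT22_sol stable_instance D22_sol"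
proof
  assume "sc_reducible stable_instance SIPT22_sol stable_instance D22_sol"
  then obtain Xh where st: "stable_instance Xh"
    and red: "\<forall>Yh. D22_sol Xh Yh \<longrightarrow> (\<exists>Y. turing_le Y Yh \<and> SIPT22_sol Xmu Y)"
    unfolding sc_reducible_def using Xmu_stable by blast
  have stb: "\<forall>x. \<exists>b. \<forall>\<^sub>F u in sequentially. col_of Xh x u = b"
    using st unfolding stable_instance_def stable_def by blast
  define p where "p x = (SOME b. \<forall>\<^sub>F u in sequentially. col_of Xh x u = b)" for x
  have pe: "\<forall>\<^sub>F u in sequentially. col_of Xh x u = p x" for x
    unfolding p_def using stb[rule_format, of x] by (rule someI_ex)
  obtain G b where G: "infinite G" "\<forall>x\<in>G. p x = b" "\<forall>d. \<not> bad mu d G"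
    using main_lemma[of p] by blast
  have "D22_sol Xh G" unfolding D22_sol_def limit_homogeneous_def
  proof (intro conjI exI ballI)
    show "infinite G" by fact
    fix x assume "x \<in> G"
    then show "\<forall>\<^sub>F u in sequentially. col_of Xh x u = b" using pe[of x] G(2) by simp
  qed
  then obtain Y where tl: "turing_le Y G" and sol: "SIPT22_sol Xmu Y" using red by blast
  obtain e where e: "\<forall>n. ev G e [n] (if n \<in> Y then 1 else 0)" using tl unfolding turing_le_def by blast
  obtain HL HR b' where J: "Y = join HL HR" and iL: "infinite HL" and iR: "infinite HR"
    and hom: "\<forall>x\<in>HL. \<forall>y\<in>HR. x < y \<longrightarrow> col_of Xmu x y = b'"
    using sol unfolding SIPT22_sol_def incr_p_homogeneous_def by blast
  obtain x0 where x0: "x0 \<in> HL" using iL infinite_imp_nonempty by blast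
  obtain y0 where y0: "y0 \<in> HR" "Suc x0 + mu x0 \<le> y0" using iR by (meson infinite_nat_iff_unbounded_le)
  have "col_of Xmu x0 y0" using y0 by (simp add: colX)
  then have b': "b' = True" using hom x0 y0 by force
  have "bad mu e G" unfolding bad_def
  proof (intro exI conjI)
    show "\<forall>n. ev G e [n] (if n \<in> Y then 1 else 0)" by fact
    show "Y = join HL HR" by fact
    show "infinite HL" by fact
    show "infinite HR" by fact
    show "\<forall>x\<in>HL. \<forall>y\<in>HR. x < y \<longrightarrow> mu x \<le> y" using hom b' colX by blast
  qed
  then show False using G(3) by blast
qed


end
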